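(* Let $\mathcal G$ be a locally compact Hausdorff étale ample groupoid with compact metrizable unit space. Then $\mathcal G$ has groupoid strict comparison if and only if $\mathcal G$ has groupoid strict comparison for compact open sets.
   Context: Ample: basis of compact open bisections (bisection: subset of an open set on which $s,r$ restrict to homeomorphisms onto open subsets of $\mathcal G^{(0)}$). $M(\mathcal G)$: regular Borel probability measures on $\mathcal G^{(0)}$ with $\mu(s(U))=\mu(r(U))$ for measurable bisections $U$. For compact $K$ and open $V$ in $\mathcal G^{(0)}$, $K\prec_{\mathcal G}V$ means there are open bisections $A_1,\dots,A_n$ with $K\subseteq\bigcup s(A_i)$ and $r(A_i)$ pairwise disjoint subsets of $V$; for open $U,V$, $U\precsim_{\mathcal G}V$ means $K\prec_{\mathcal G}V$ for all compact $K\subseteq U$. Groupoid strict comparison: $U\precsim_{\mathcal G}V$ for all open $U,V\subseteq\mathcal G^{(0)}$ with $\mu(U)<\mu(V)$ for every $\mu\in M(\mathcal G)$. Groupoid strict comparison for compact open sets: the same condition required only for compact open $U,V\subseteq\mathcal G^{(0)}$. *)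

theory Defs
  imports "HOL-Probability.Probability"
begin

text \<open>A groupoid on the whole type 'g, given by source s, range r, partial
multiplication m (g h composable iff s g = r h) and inverse i.\<close>

definition groupoid :: "('g \<Rightarrow> 'g) \<Rightarrow> ('g \<Rightarrow> 'g) \<Rightarrow> ('g \<Rightarrow> 'g \<Rightarrow> 'g) \<Rightarrow> ('g \<Rightarrow> 'g) \<Rightarrow> bool" where
  "groupoid s r m i \<longleftrightarrow>
     (\<forall>g. s (s g) = s g \<and> r (s g) = s g \<and> s (r g) = r g \<and> r (r g) = r g) \<and>
     (\<forall>g h. s g = r h \<longrightarrow> s (m g h) = s h \<and> r (m g h) = r g) \<and>
     (\<forall>g h k. s g = r h \<longrightarrow> s h = r k \<longrightarrow> m (m g h) k = m g (m h k)) \<and>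
     (\<forall>g. m (r g) g = g \<and> m g (s g) = g) \<and>
     (\<forall>g. s (i g) = r g \<and> r (i g) = s g \<and> m g (i g) = r g \<and> m (i g) g = s g)"

definition unit_space :: "('g \<Rightarrow> 'g) \<Rightarrow> 'g set" where
  "unit_space s = range s"

definition topological_groupoid ::
  "('g::topological_space \<Rightarrow> 'g) \<Rightarrow> ('g \<Rightarrow> 'g) \<Rightarrow> ('g \<Rightarrow> 'g \<Rightarrow> 'g) \<Rightarrow> ('g \<Rightarrow> 'g) \<Rightarrow> bool" where
  "topological_groupoid s r m i \<longleftrightarrow> groupoid s r m i \<and>
     continuous_on UNIV s \<and> continuous_on UNIV r \<and> continuous_on UNIV i \<and>
     continuous_on {(g, h). s g = r h} (\<lambda>(g, h). m g h)"

definition bisection :: "('g::topological_space \<Rightarrow> 'g) \<Rightarrow> ('g \<Rightarrow> 'g) \<Rightarrow> 'g set \<Rightarrow> bool" where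
  "bisection s r U \<longleftrightarrow> (\<exists>V. open V \<and> U \<subseteq> V \<and>
     openin (top_of_set (unit_space s)) (s ` V) \<and>
     openin (top_of_set (unit_space s)) (r ` V) \<and>
     homeomorphic_map (top_of_set V) (top_of_set (s ` V)) s \<and>
     homeomorphic_map (top_of_set V) (top_of_set (r ` V)) r)"

definition open_bisection :: "('g::topological_space \<Rightarrow> 'g) \<Rightarrow> ('g \<Rightarrow> 'g) \<Rightarrow> 'g set \<Rightarrow> bool" where
  "open_bisection s r U \<longleftrightarrow> open U \<and> bisection s r U"

definition etale :: "('g::topological_space \<Rightarrow> 'g) \<Rightarrow> ('g \<Rightarrow> 'g) \<Rightarrow> bool" where
  "etale s r \<longleftrightarrow> (\<forall>g. \<exists>U. open U \<and> g \<in> U \<and>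
     open (s ` U) \<and> homeomorphic_map (top_of_set U) (top_of_set (s ` U)) s \<and>
     open (r ` U) \<and> homeomorphic_map (top_of_set U) (top_of_set (r ` U)) r)"

definition ample :: "('g::topological_space \<Rightarrow> 'g) \<Rightarrow> ('g \<Rightarrow> 'g) \<Rightarrow> bool" where
  "ample s r \<longleftrightarrow> (\<forall>W x. open W \<longrightarrow> x \<in> W \<longrightarrow>
     (\<exists>U. compact U \<and> open_bisection s r U \<and> x \<in> U \<and> U \<subseteq> W))"

definition regular_borel_prob :: "'g::topological_space set \<Rightarrow> 'g measure \<Rightarrow> bool" where
  "regular_borel_prob X \<mu> \<longleftrightarrow> prob_space \<mu> \<and> space \<mu> = X \<and>
     sets \<mu> = sets (restrict_space borel X) \<and>
     (\<forall>A \<in> sets \<mu>.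
        emeasure \<mu> A = (INF U \<in> {U. openin (top_of_set X) U \<and> A \<subseteq> U}. emeasure \<mu> U) \<and>
        emeasure \<mu> A = (SUP K \<in> {K. compact K \<and> K \<subseteq> A}. emeasure \<mu> K))"

definition invariant_measures :: "('g::topological_space \<Rightarrow> 'g) \<Rightarrow> ('g \<Rightarrow> 'g) \<Rightarrow> 'g measure set" where
  "invariant_measures s r = {\<mu>. regular_borel_prob (unit_space s) \<mu> \<and>
     (\<forall>U. U \<in> sets borel \<longrightarrow> bisection s r U \<longrightarrow> measure \<mu> (s ` U) = measure \<mu> (r ` U))}"

definition precedes :: "('g::topological_space \<Rightarrow> 'g) \<Rightarrow> ('g \<Rightarrow> 'g) \<Rightarrow> 'g set \<Rightarrow> 'g set \<Rightarrow> bool" where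
  "precedes s r K V \<longleftrightarrow> (\<exists>(n::nat) A. (\<forall>j<n. open_bisection s r (A j)) \<and>
     K \<subseteq> (\<Union>j<n. s ` A j) \<and> (\<forall>j<n. r ` A j \<subseteq> V) \<and>
     (\<forall>j<n. \<forall>k<n. j \<noteq> k \<longrightarrow> r ` A j \<inter> r ` A k = {}))"

definition subequiv :: "('g::topological_space \<Rightarrow> 'g) \<Rightarrow> ('g \<Rightarrow> 'g) \<Rightarrow> 'g set \<Rightarrow> 'g set \<Rightarrow> bool" where
  "subequiv s r U V \<longleftrightarrow> (\<forall>K. compact K \<longrightarrow> K \<subseteq> U \<longrightarrow> precedes s r K V)"

definition strict_comparison :: "('g::topological_space \<Rightarrow> 'g) \<Rightarrow> ('g \<Rightarrow> 'g) \<Rightarrow> bool" where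
  "strict_comparison s r \<longleftrightarrow> (\<forall>U V.
     openin (top_of_set (unit_space s)) U \<longrightarrow> openin (top_of_set (unit_space s)) V \<longrightarrow>
     (\<forall>\<mu> \<in> invariant_measures s r. measure \<mu> U < measure \<mu> V) \<longrightarrow> subequiv s r U V)"

definition strict_comparison_compact_open :: "('g::topological_space \<Rightarrow> 'g) \<Rightarrow> ('g \<Rightarrow> 'g) \<Rightarrow> bool" where
  "strict_comparison_compact_open s r \<longleftrightarrow> (\<forall>U V.
     openin (top_of_set (unit_space s)) U \<longrightarrow> compact U \<longrightarrow>
     openin (top_of_set (unit_space s)) V \<longrightarrow> compact V \<longrightarrow>
     (\<forall>\<mu> \<in> invariant_measures s r. measure \<mu> U < measure \<mu> V) \<longrightarrow> subequiv s r U V)"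

end

theory Submission imports Defs begin

lemma compact_metrizable_second_countable:
  assumes "metrizable_space T" "compact_space T"
  shows "second_countable T"
proof -
  obtain M d where md: "Metric_space M d" and T: "T = Metric_space.mtopology M d"
    using assms(1) unfolding metrizable_space_def by blast
  interpret Metric_space M d by (rule md)
  have cs: "compact_space mtopology" using assms(2) T by simp
  have "\<exists>F. finite F \<and> F \<subseteq> M \<and> M \<subseteq> (\<Union>x\<in>F. mball x (1 / Suc n))" for n
  proof -
    have "\<exists>\<F>. finite \<F> \<and> \<F> \<subseteq> (\<lambda>x. mball x (1 / Suc n)) ` M \<and> \<Union>\<F> = topspace mtopology"
      using cs unfolding compact_space
      apply (elim allE[where x="(\<lambda>x. mball x (1 / Suc n)) ` M"])
      apply (erule mp)
      by (auto simp: mball_subset_mspace)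
    then obtain \<F> where "finite \<F>" "\<F> \<subseteq> (\<lambda>x. mball x (1 / Suc n)) ` M" "\<Union>\<F> = M" by auto
    then obtain F where "F \<subseteq> M" "finite F" "\<F> = (\<lambda>x. mball x (1 / Suc n)) ` F"
      by (meson finite_subset_image)
    then show ?thesis using \<open>\<Union>\<F> = M\<close> by auto
  qed
  then obtain F where F: "\<And>n. finite (F n)" "\<And>n. F n \<subseteq> M" "\<And>n. M \<subseteq> (\<Union>x\<in>F n. mball x (1 / Suc n))"
    by metis
  define \<B> where "\<B> = (\<Union>n. (\<lambda>x. mball x (1 / Suc n)) ` F n)"
  have "countable \<B>" unfolding \<B>_def by (rule countable_UN) (auto simp: F(1) countable_finite)
  moreover have "\<forall>V\<in>\<B>. openin mtopology V" unfolding \<B>_def by auto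
  moreover have "\<exists>V\<in>\<B>. x \<in> V \<and> V \<subseteq> U" if UX: "openin mtopology U" "x \<in> U" for U x
  proof -
    obtain e where e: "e > 0" "mball x e \<subseteq> U" using UX openin_mtopology by metis
    obtain n where n: "2 / Suc n < e"
    proof -
      obtain n where "inverse (real (Suc n)) < e / 2" using reals_Archimedean \<open>e>0\<close> half_gt_zero by blast
      then show ?thesis using that[of n] by (simp add: field_simps)
    qed
    have xM: "x \<in> M" using UX openin_subset by force
    then obtain y where y: "y \<in> F n" "x \<in> mball y (1 / Suc n)" using F(3)[of n] by auto
    have "mball y (1 / Suc n) \<subseteq> mball x e"
    proof
      fix z assume z: "z \<in> mball y (1 / Suc n)"
      have "d x z \<le> d x y + d y z" using y z by (auto intro: triangle)
      also have "\<dots> < 2 / Suc n" using y z by (auto simp: commute)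
      finally show "z \<in> mball x e" using z xM n by auto
    qed
    then show ?thesis using y e unfolding \<B>_def by blast
  qed
  ultimately show ?thesis unfolding second_countable_def T by blast
qed


locale ug =
  fixes s r :: "'g::t2_space \<Rightarrow> 'g"
  assumes cs: "continuous_on UNIV s" and cr: "continuous_on UNIV r"
    and Xo: "open (unit_space s)" and Xc: "compact (unit_space s)"
    and basis: "\<And>W x. open (W::'g set) \<Longrightarrow> x \<in> W \<Longrightarrow> \<exists>C. compact C \<and> open C \<and> x \<in> C \<and> C \<subseteq> W"
    and sc: "second_countable (top_of_set (unit_space s))"
begin

abbreviation "X \<equiv> unit_space s"

definition CO where "CO = {C. C \<subseteq> X \<and> open C \<and> compact C}"

lemma X_closed: "closed X" using Xc compact_imp_closed by blast

lemma CO_Un: "A \<in> CO \<Longrightarrow> B \<in> CO \<Longrightarrow> A \<union> B \<in> CO"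
  by (auto simp: CO_def compact_Un)
lemma CO_Int: "A \<in> CO \<Longrightarrow> B \<in> CO \<Longrightarrow> A \<inter> B \<in> CO"
  by (auto simp: CO_def compact_Int)
lemma CO_Diff: "A \<in> CO \<Longrightarrow> B \<in> CO \<Longrightarrow> A - B \<in> CO"
  by (auto simp: CO_def compact_imp_closed open_Diff compact_diff)
lemma CO_empty: "{} \<in> CO" by (auto simp: CO_def)
lemma CO_X: "X \<in> CO" using Xo Xc by (auto simp: CO_def)
lemma CO_sub: "A \<in> CO \<Longrightarrow> A \<subseteq> X" by (auto simp: CO_def)

lemma lindelof_X:
  assumes "open W" "W \<subseteq> X" "\<And>U. U \<in> \<U> \<Longrightarrow> open U" "\<Union>\<U> = W"
  shows "\<exists>\<V>. countable \<V> \<and> \<V> \<subseteq> \<U> \<and> \<Union>\<V> = W"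
proof -
  have "second_countable (subtopology (top_of_set X) W)"
    by (rule second_countable_subtopology[OF sc])
  then have "second_countable (top_of_set W)"
    using assms(2) by (simp add: subtopology_subtopology Int_absorb1)
  then have L: "Lindelof_space (top_of_set W)" by (rule second_countable_imp_Lindelof_space)
  have "\<And>U. U \<in> \<U> \<Longrightarrow> openin (top_of_set W) U"
    using assms(3,4) by (auto simp: openin_open_eq assms(1))
  then show ?thesis
    using Lindelof_spaceD[OF L, of \<U>] assms(4) by auto
qed

lemma CO_cover:
  assumes "open W" "W \<subseteq> X"
  shows "\<exists>\<C>. countable \<C> \<and> \<C> \<subseteq> CO \<and> \<Union>\<C> = W"
proof -
  define U where "U = {C \<in> CO. C \<subseteq> W}"
  have "\<Union>U = W"
  proof
    show "W \<subseteq> \<Union>U"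
    proof
      fix x assume "x \<in> W"
      obtain C where "compact C" "open C" "x \<in> C" "C \<subseteq> W" using basis[OF assms(1) \<open>x \<in> W\<close>] by (elim exE conjE)
      then have "C \<in> U" using assms(2) unfolding U_def CO_def by blast
      then show "x \<in> \<Union>U" using \<open>x \<in> C\<close> by blast
    qed
  next
    show "\<Union>U \<subseteq> W" unfolding U_def by blast
  qed
  moreover have "\<And>V. V \<in> U \<Longrightarrow> open V" unfolding U_def CO_def by blast
  ultimately obtain \<V> where "countable \<V>" "\<V> \<subseteq> U" "\<Union>\<V> = W"
    using lindelof_X[OF assms, of U] by blast
  then show ?thesis unfolding U_def by blast
qed

lemma sigma_eq: "sigma_sets X CO = sets (restrict_space borel X)"
proof -
  have "sets (restrict_space borel X) = (\<inter>) X ` sigma_sets UNIV {S. open S}"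
    by (simp add: sets_restrict_space sets_borel)
  also have "\<dots> = sigma_sets X ((\<inter>) X ` {S. open S})"
    by (rule sigma_sets_Int) (auto intro: sigma_sets.Basic Xo)
  also have "\<dots> = sigma_sets X CO"
  proof (rule sigma_sets_eqI)
    fix a assume "a \<in> (\<inter>) X ` {S. open S}"
    then obtain S where S: "open S" "a = X \<inter> S" by auto
    then have "open a" "a \<subseteq> X" using Xo by auto
    then obtain \<C> where C: "countable \<C>" "\<C> \<subseteq> CO" "\<Union>\<C> = a" using CO_cover by metis
    show "a \<in> sigma_sets X CO"
    proof (cases "\<C> = {}")
      case True then show ?thesis using C sigma_sets.Empty by auto
    next
      case False
      then obtain f :: "nat \<Rightarrow> 'g set" where "\<C> = range f" using C(1) uncountable_def by (metis range_from_nat_into)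
      then have "\<And>i. f i \<in> sigma_sets X CO" using C by (auto intro: sigma_sets.Basic)
      then have "(\<Union>i. f i) \<in> sigma_sets X CO" by (rule sigma_sets.Union)
      then show ?thesis using C \<open>\<C> = range f\<close> by simp
    qed
  next
    fix b assume "b \<in> CO"
    then show "b \<in> sigma_sets X ((\<inter>) X ` {S. open S})"
      by (intro sigma_sets.Basic) (auto simp: CO_def)
  qed
  finally show ?thesis by simp
qed

lemma open_in_sets:
  assumes "sets \<mu> = sets (restrict_space borel X)" "open C" "C \<subseteq> X"
  shows "C \<in> sets \<mu>"
  using assms by (auto simp: sets_restrict_space intro!: image_eqI[of _ _ C])

lemma compact_in_sets:
  assumes "sets \<mu> = sets (restrict_space borel X)" "compact C" "C \<subseteq> X"
  shows "C \<in> sets \<mu>"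
  using assms by (auto simp: sets_restrict_space compact_imp_closed intro!: image_eqI[of _ _ C])

definition appr :: "'g measure \<Rightarrow> 'g set \<Rightarrow> bool" where
  "appr N A \<longleftrightarrow> (\<forall>e>0. \<exists>C W. compact C \<and> open W \<and> C \<subseteq> A \<and> A \<subseteq> W \<and> W \<subseteq> X \<and> measure N (W - C) < e)"

lemma apprE:
  assumes "appr N A" "e > 0"
  obtains C W where "compact C" "open W" "C \<subseteq> A" "A \<subseteq> W" "W \<subseteq> X" "measure N (W - C) < e"
proof -
  have "\<exists>C W. compact C \<and> open W \<and> C \<subseteq> A \<and> A \<subseteq> W \<and> W \<subseteq> X \<and> measure N (W - C) < e"
    using assms unfolding appr_def by simp
  then show ?thesis using that by (elim exE conjE) 
qed

lemma apprI:
  assumes "\<And>e. e > 0 \<Longrightarrow> \<exists>C W. compact C \<and> open W \<and> C \<subseteq> A \<and> A \<subseteq> W \<and> W \<subseteq> X \<and> measure N (W - C) < e"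
  shows "appr N A"
  using assms unfolding appr_def by simp

lemma appr_all:
  assumes N: "prob_space N" "sets N = sets (restrict_space borel X)"
    and A: "A \<in> sets N"
  shows "appr N A"
proof -
  interpret N: prob_space N by (rule N(1))
  have mo: "W \<in> sets N" if "open W" "W \<subseteq> X" for W using open_in_sets[OF N(2) that] .
  have mc: "C \<in> sets N" if "compact C" "C \<subseteq> X" for C using compact_in_sets[OF N(2) that] .
  have A': "A \<in> sigma_sets X CO" using A N(2) sigma_eq by simp
  have "Int_stable CO" unfolding Int_stable_def using CO_Int by blast
  moreover have "CO \<subseteq> Pow X" using CO_sub by blast
  ultimately show ?thesis using A'
  proof (induction rule: sigma_sets_induct_disjoint)
    case (basic A)
    then show ?case unfolding appr_def CO_def by (intro allI impI exI[of _ A]) auto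
  next
    case empty
    then show ?case unfolding appr_def by (intro allI impI exI[of _ "{}"]) auto
  next
    case (compl A)
    show ?case unfolding appr_def
    proof (intro allI impI)
      fix e :: real assume "e > 0"
      obtain C W where CW: "compact C" "open W" "C \<subseteq> A" "A \<subseteq> W" "W \<subseteq> X" "measure N (W - C) < e"
        using apprE[OF compl(2) \<open>e > 0\<close>] by metis
      have "C \<subseteq> X" using CW by blast
      have "compact (X - W)" using Xc CW(2) by (rule compact_diff)
      moreover have "open (X - C)" using Xo CW(1) by (simp add: open_Diff compact_imp_closed)
      moreover have "(X - C) - (X - W) = W - C" using CW(5) by blast
      moreover have "X - W \<subseteq> X - A" "X - A \<subseteq> X - C" "X - C \<subseteq> X" using CW by auto
      ultimately show "\<exists>C W. compact C \<and> open W \<and> C \<subseteq> X - A \<and> X - A \<subseteq> W \<and> W \<subseteq> X \<and> measure N (W - C) < e"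
        using CW(6) by metis
    qed
  next
    case (union A)
    have Ameas: "A i \<in> sets N" for i using union(2) sigma_eq N(2) by auto
    show ?case unfolding appr_def
    proof (intro allI impI)
      fix e :: real assume e: "e > 0"
      define d where "d i = e / 4 * (1/2) ^ i" for i :: nat
      have dpos: "d i > 0" for i using e by (simp add: d_def)
      have "\<exists>C W. compact C \<and> open W \<and> C \<subseteq> A i \<and> A i \<subseteq> W \<and> W \<subseteq> X \<and> measure N (W - C) < d i" for i
        using union(3)[of i] dpos[of i] unfolding appr_def by simp
      then obtain C W where CW: "\<And>i. compact (C i)" "\<And>i. open (W i)" "\<And>i. C i \<subseteq> A i" "\<And>i. A i \<subseteq> W i"
        "\<And>i. W i \<subseteq> X" "\<And>i. measure N (W i - C i) < d i"
        by metis
      have CX: "C i \<subseteq> X" for i using CW(3,4,5) by blast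
      have "(\<lambda>n. measure N (\<Union>i\<in>{..<n}. A i)) \<longlonglongrightarrow> measure N (\<Union>n. \<Union>i\<in>{..<n}. A i)"
        by (rule N.finite_Lim_measure_incseq) (auto simp: Ameas incseq_def, meson lessThan_iff less_le_trans)
      moreover have "(\<Union>n. \<Union>i\<in>{..<n}. A i) = (\<Union>i. A i)" by auto
      ultimately have lim: "(\<lambda>n. measure N (\<Union>i\<in>{..<n}. A i)) \<longlonglongrightarrow> measure N (\<Union>i. A i)" by simp
      have "e / 2 > 0" using e by simp
      from LIMSEQ_D[OF lim this] obtain n where
        n: "norm (measure N (\<Union>i\<in>{..<n}. A i) - measure N (\<Union>i. A i)) < e / 2" by auto
      define T where "T = (\<Union>i. A i) - (\<Union>i\<in>{..<n}. A i)"
      have Tm: "measure N T < e / 2"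
      proof -
        have "measure N T = measure N (\<Union>i. A i) - measure N (\<Union>i\<in>{..<n}. A i)"
          unfolding T_def by (rule N.finite_measure_Diff) (auto simp: Ameas)
        then show ?thesis using n by (simp only: real_norm_def)
      qed
      define CC where "CC = (\<Union>i\<in>{..<n}. C i)"
      define WW where "WW = (\<Union>i. W i)"
      have "compact CC" unfolding CC_def using CW(1) by (intro compact_UN) auto
      moreover have "open WW" unfolding WW_def using CW(2) by auto
      moreover have "CC \<subseteq> (\<Union>i. A i)" unfolding CC_def using CW(3) by blast
      moreover have "(\<Union>i. A i) \<subseteq> WW" unfolding WW_def using CW(4) by blast
      moreover have "WW \<subseteq> X" unfolding WW_def using CW(5) by blast
      moreover have "measure N (WW - CC) < e"
      proof -
        have sub: "WW - CC \<subseteq> (\<Union>i. W i - C i) \<union> T"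
        proof
          fix x assume x: "x \<in> WW - CC"
          then obtain j where j: "x \<in> W j" unfolding WW_def by blast
          show "x \<in> (\<Union>i. W i - C i) \<union> T"
          proof (cases "x \<in> C j")
            case False then show ?thesis using j by blast
          next
            case True
            have "j \<ge> n" by (rule ccontr) (use x True in \<open>auto simp: CC_def\<close>)
            have xA: "x \<in> A j" using True CW(3) by blast
            have "x \<notin> A i" if "i < n" for i
            proof -
              have "i \<noteq> j" using that \<open>j \<ge> n\<close> by simp
              then have "A i \<inter> A j = {}" using union(1) by (simp add: disjoint_family_on_def)
              then show ?thesis using xA by blast
            qed
            then show ?thesis using xA unfolding T_def by blast
          qed
        qed
        have m1: "(\<lambda>i. W i - C i) i \<in> sets N" for i using mo[OF CW(2) CW(5)] mc[OF CW(1) CX] by auto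
        have sd: "summable d" unfolding d_def by (intro summable_mult summable_geometric) auto
        have sumd: "(\<Sum>i. d i) = e / 2" unfolding d_def
          by (subst suminf_mult) (auto simp: suminf_geometric)
        have sm: "summable (\<lambda>i. measure N (W i - C i))"
          by (rule summable_comparison_test'[OF sd]) (use CW(6) less_imp_le in auto)
        have "measure N (\<Union>i. W i - C i) \<le> (\<Sum>i. measure N (W i - C i))"
          by (rule N.finite_measure_subadditive_countably) (use m1 sm in auto)
        also have "\<dots> \<le> (\<Sum>i. d i)" by (rule suminf_le) (use CW(6) less_imp_le sm sd in auto)
        finally have m2: "measure N (\<Union>i. W i - C i) \<le> e / 2" using sumd by simp
        have Tmeas: "T \<in> sets N" unfolding T_def using Ameas by auto
        have Um: "(\<Union>i. W i - C i) \<in> sets N" using m1 by auto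
        have "measure N (WW - CC) \<le> measure N ((\<Union>i. W i - C i) \<union> T)"
          by (rule N.finite_measure_mono[OF sub]) (use Tmeas Um in auto)
        also have "\<dots> \<le> measure N (\<Union>i. W i - C i) + measure N T"
          by (rule measure_subadditive) (use Tmeas Um in auto)
        finally show ?thesis using m2 Tm by simp
      qed
      ultimately show "\<exists>C W. compact C \<and> open W \<and> C \<subseteq> (\<Union>i. A i) \<and> (\<Union>i. A i) \<subseteq> W \<and> W \<subseteq> X \<and> measure N (W - C) < e"
        by blast
    qed
  qed
qed

lemma regular:
  assumes N: "prob_space N" "space N = X" "sets N = sets (restrict_space borel X)"
  shows "regular_borel_prob X N"
  unfolding regular_borel_prob_def
proof (intro conjI ballI N)
  interpret N: prob_space N by (rule N(1))
  fix A assume A: "A \<in> sets N"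
  have AX: "A \<subseteq> X" using sets.sets_into_space[OF A] N(2) by simp
  have ap: "appr N A" by (rule appr_all[OF N(1) N(3) A])
  have key: "\<exists>C W. compact C \<and> open W \<and> C \<subseteq> A \<and> A \<subseteq> W \<and> W \<subseteq> X \<and> C \<in> sets N \<and> W \<in> sets N
      \<and> measure N A \<le> measure N C + e \<and> measure N W \<le> measure N A + e" if e: "e > 0" for e
  proof -
    obtain C W where CW: "compact C" "open W" "C \<subseteq> A" "A \<subseteq> W" "W \<subseteq> X" "measure N (W - C) < e"
      using apprE[OF ap e] by metis
    have Cm: "C \<in> sets N" using compact_in_sets[OF N(3) CW(1)] CW(3) AX by blast
    have Wm: "W \<in> sets N" using open_in_sets[OF N(3) CW(2) CW(5)] .
    have "measure N (W - C) = measure N W - measure N C"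
      by (rule N.finite_measure_Diff[OF Wm Cm]) (use CW in blast)
    moreover have "measure N A \<le> measure N W" by (rule N.finite_measure_mono[OF CW(4) Wm])
    moreover have "measure N C \<le> measure N A" by (rule N.finite_measure_mono[OF CW(3) A])
    ultimately show ?thesis using CW Cm Wm by (intro exI[of _ C] exI[of _ W]) auto
  qed
  show "emeasure N A = (INF U \<in> {U. openin (top_of_set X) U \<and> A \<subseteq> U}. emeasure N U)"
  proof (rule antisym)
    show "emeasure N A \<le> (INF U \<in> {U. openin (top_of_set X) U \<and> A \<subseteq> U}. emeasure N U)"
    proof (rule INF_greatest)
      fix U assume "U \<in> {U. openin (top_of_set X) U \<and> A \<subseteq> U}"
      then have "open U" "U \<subseteq> X" "A \<subseteq> U" using Xo by (auto simp: openin_open_eq)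
      then show "emeasure N A \<le> emeasure N U" using open_in_sets[OF N(3)] by (intro emeasure_mono) auto
    qed
    show "(INF U \<in> {U. openin (top_of_set X) U \<and> A \<subseteq> U}. emeasure N U) \<le> emeasure N A"
    proof (rule ennreal_le_epsilon)
      fix e :: real assume "0 < e"
      then obtain C W where CW: "open W" "A \<subseteq> W" "W \<subseteq> X" "measure N W \<le> measure N A + e"
        using key[OF \<open>0 < e\<close>] by blast
      have "(INF U \<in> {U. openin (top_of_set X) U \<and> A \<subseteq> U}. emeasure N U) \<le> emeasure N W"
        using CW Xo by (intro INF_lower) (auto simp: openin_open_eq)
      also have "\<dots> = ennreal (measure N W)" by (rule N.emeasure_eq_measure)
      also have "\<dots> \<le> ennreal (measure N A + e)" using CW(4) by (rule ennreal_leI)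
      also have "\<dots> = emeasure N A + ennreal e"
        using \<open>0 < e\<close> by (simp add: N.emeasure_eq_measure ennreal_plus)
      finally show "(INF U \<in> {U. openin (top_of_set X) U \<and> A \<subseteq> U}. emeasure N U) \<le> emeasure N A + ennreal e" .
    qed
  qed
  show "emeasure N A = (SUP K \<in> {K. compact K \<and> K \<subseteq> A}. emeasure N K)"
  proof (rule antisym)
    show "(SUP K \<in> {K. compact K \<and> K \<subseteq> A}. emeasure N K) \<le> emeasure N A"
    proof (rule SUP_least)
      fix K assume "K \<in> {K. compact K \<and> K \<subseteq> A}"
      then show "emeasure N K \<le> emeasure N A" using A by (intro emeasure_mono) auto
    qed
    show "emeasure N A \<le> (SUP K \<in> {K. compact K \<and> K \<subseteq> A}. emeasure N K)"
    proof (rule ennreal_le_epsilon)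
      fix e :: real assume "0 < e"
      then obtain C W where CW: "compact C" "C \<subseteq> A" "measure N A \<le> measure N C + e"
        using key[OF \<open>0 < e\<close>] by blast
      have "emeasure N A = ennreal (measure N A)" by (rule N.emeasure_eq_measure)
      also have "\<dots> \<le> ennreal (measure N C + e)" using CW(3) by (rule ennreal_leI)
      also have "\<dots> = emeasure N C + ennreal e"
        using \<open>0 < e\<close> by (simp add: N.emeasure_eq_measure ennreal_plus)
      also have "\<dots> \<le> (SUP K \<in> {K. compact K \<and> K \<subseteq> A}. emeasure N K) + ennreal e"
        using CW by (intro add_right_mono SUP_upper) auto
      finally show "emeasure N A \<le> (SUP K \<in> {K. compact K \<and> K \<subseteq> A}. emeasure N K) + ennreal e" .
    qed
  qed
qed

lemma ring_CO: "ring_of_sets X CO"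
  by (rule ring_of_setsI) (auto simp: CO_empty CO_Un CO_Diff dest: CO_sub)

lemma construct:
  fixes \<nu> :: "'g set \<Rightarrow> real"
  assumes pos: "\<And>C. C \<in> CO \<Longrightarrow> \<nu> C \<ge> 0"
    and add: "\<And>A B. A \<in> CO \<Longrightarrow> B \<in> CO \<Longrightarrow> A \<inter> B = {} \<Longrightarrow> \<nu> (A \<union> B) = \<nu> A + \<nu> B"
    and one: "\<nu> X = 1"
  shows "\<exists>N. prob_space N \<and> space N = X \<and> sets N = sets (restrict_space borel X) \<and>
           (\<forall>C\<in>CO. emeasure N C = ennreal (\<nu> C))"
proof -
  interpret R: ring_of_sets X CO by (rule ring_CO)
  define f where "f C = ennreal (\<nu> C)" for C
  have "\<nu> {} = \<nu> {} + \<nu> {}" using add[OF CO_empty CO_empty] by simp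
  then have e0: "\<nu> {} = 0" by simp
  have fpos: "positive CO f" unfolding positive_def f_def using e0 by simp
  have fadd: "additive CO f" unfolding additive_def f_def
    using add pos by (simp add: ennreal_plus)
  have fca: "countably_additive CO f" unfolding countably_additive_def
  proof (intro allI impI)
    fix A :: "nat \<Rightarrow> 'g set" assume A: "range A \<subseteq> CO" "disjoint_family A" "(\<Union>i. A i) \<in> CO"
    have "compact (\<Union>i. A i)" using A(3) by (simp add: CO_def)
    then obtain C' where C': "C' \<subseteq> UNIV" "finite C'" "(\<Union>i. A i) \<subseteq> (\<Union>c\<in>C'. A c)"
      by (rule compactE_image[of _ UNIV A]) (use A(1) in \<open>auto simp: CO_def\<close>)
    obtain n where n: "C' \<subseteq> {..<n}" using finite_nat_bounded[OF C'(2)] by blast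
    have cov: "(\<Union>i. A i) = (\<Union>i\<in>{..<n}. A i)" using C'(3) n by blast
    have zero: "A j = {}" if "j \<notin> {..<n}" for j
    proof -
      have "A j \<subseteq> (\<Union>i\<in>{..<n}. A i)" using cov by blast
      moreover have "A j \<inter> A i = {}" if "i < n" for i
        using A(2) that \<open>j \<notin> {..<n}\<close> unfolding disjoint_family_on_def by (metis UNIV_I lessThan_iff)
      ultimately show ?thesis by blast
    qed
    have "(\<Sum>i. f (A i)) = (\<Sum>i\<in>{..<n}. f (A i))"
      by (rule suminf_finite) (auto simp: zero f_def e0)
    also have "\<dots> = f (\<Union>i\<in>{..<n}. A i)"
      by (rule R.additive_sum[OF fpos fadd]) (use A in \<open>auto simp: disjoint_family_on_def\<close>)
    also have "\<dots> = f (\<Union>i. A i)" using cov by simp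
    finally show "(\<Sum>i. f (A i)) = f (\<Union>i. A i)" .
  qed
  obtain \<mu> where mu: "\<forall>C\<in>CO. \<mu> C = f C" "measure_space X (sigma_sets X CO) \<mu>"
    using R.caratheodory'[OF fpos fca] by blast
  define N where "N = measure_of X CO \<mu>"
  have sp: "space N = X" unfolding N_def by (rule space_measure_of_conv)
  have st: "sets N = sigma_sets X CO" unfolding N_def using R.space_closed by (simp add: sets_measure_of_conv)
  have em: "emeasure N C = ennreal (\<nu> C)" if "C \<in> CO" for C
    using that mu unfolding N_def f_def by (simp add: emeasure_measure_of_conv sigma_sets.Basic)
  have "prob_space N" by (rule prob_spaceI) (simp add: sp em CO_X one)
  then show ?thesis using sp st em sigma_eq by auto
qed

definition "hw t B \<longleftrightarrow> open B \<and> openin (top_of_set X) (t ` B) \<and> homeomorphic_map (top_of_set B) (top_of_set (t ` B)) t"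

lemma hw_inj: "hw t B \<Longrightarrow> inj_on t B"
  unfolding hw_def using homeomorphic_imp_injective_map by fastforce

lemma hw_open:
  assumes "hw t B" "open E" "E \<subseteq> B"
  shows "open (t ` E)" "t ` E \<subseteq> X"
proof -
  have B: "open B" "openin (top_of_set X) (t ` B)" "homeomorphic_map (top_of_set B) (top_of_set (t ` B)) t"
    using assms(1) unfolding hw_def by auto
  have tB: "open (t ` B)" "t ` B \<subseteq> X" using B(2) Xo by (auto simp: openin_open_eq)
  have "openin (top_of_set B) E" using assms(2,3) B(1) by (simp add: openin_open_eq)
  then have "openin (top_of_set (t ` B)) (t ` E)"
    using homeomorphic_imp_open_map[OF B(3)] unfolding open_map_def by blast
  then show "open (t ` E)" using tB(1) by (simp add: openin_open_eq)
  show "t ` E \<subseteq> X" using assms(3) tB(2) by blast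
qed

lemma hw_meas:
  assumes "hw t B" "sets N = sets (restrict_space borel X)" "E \<in> sets borel" "E \<subseteq> B"
  shows "t ` E \<in> sets N"
proof -
  have oB: "open B" using assms(1) by (simp add: hw_def)
  have inj: "inj_on t B" by (rule hw_inj[OF assms(1)])
  have "E \<in> (\<inter>) B ` sigma_sets UNIV {S. open S}"
    using assms(3,4) sets_borel by (auto intro!: image_eqI[of _ _ E])
  also have "\<dots> = sigma_sets B ((\<inter>) B ` {S. open S})"
    by (rule sigma_sets_Int) (use oB in auto)
  finally have E: "E \<in> sigma_sets B ((\<inter>) B ` {S. open S})" .
  have G: "(\<inter>) B ` {S. open S} \<subseteq> Pow B" by auto
  from E show ?thesis
  proof (induction rule: sigma_sets.induct)
    case (Basic a)
    then obtain S where "open S" "a = B \<inter> S" by auto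
    then have "open a" "a \<subseteq> B" using oB by auto
    then show ?case using hw_open[OF assms(1), of a] open_in_sets[OF assms(2), of "t ` a"] by simp
  next
    case Empty then show ?case by simp
  next
    case (Compl a)
    have "a \<subseteq> B" using sigma_sets_into_sp[OF G Compl(1)] .
    then have "t ` (B - a) = t ` B - t ` a" using inj by (auto simp: inj_on_def)
    moreover have "t ` B \<in> sets N" using hw_open[OF assms(1) oB order_refl] open_in_sets[OF assms(2), of "t ` B"] by simp
    ultimately show ?case using Compl(2) by auto
  next
    case (Union a)
    then show ?case by (simp add: image_UN sets.countable_UN)
  qed
qed

lemma bis_hw: "bisection s r U \<longleftrightarrow> (\<exists>B. hw s B \<and> hw r B \<and> U \<subseteq> B)"
  unfolding bisection_def hw_def by blast

lemma hw_CO: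
  assumes "hw t B" "continuous_on UNIV t" "compact A" "open A" "A \<subseteq> B"
  shows "t ` A \<in> CO"
proof -
  have "compact (t ` A)"
    by (rule compact_continuous_image[OF continuous_on_subset[OF assms(2)] assms(3)]) auto
  then show ?thesis using hw_open[OF assms(1) assms(4) assms(5)] by (simp add: CO_def)
qed

lemma eq_part:
  fixes \<nu> :: "'g set \<Rightarrow> real"
  assumes N: "prob_space N" "sets N = sets (restrict_space borel X)"
    and em: "\<And>C. C \<in> CO \<Longrightarrow> emeasure N C = ennreal (\<nu> C)"
    and inv: "\<And>A. compact A \<Longrightarrow> open_bisection s r A \<Longrightarrow> \<nu> (s ` A) = \<nu> (r ` A)"
    and B: "hw s B" "hw r B"
    and A: "compact A" "open A" "A \<subseteq> B"
    and E: "E \<in> sets borel" "E \<subseteq> A"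
  shows "emeasure N (r ` E) = emeasure N (s ` E)"
proof -
  interpret N: prob_space N by (rule N(1))
  have injs: "inj_on s A" using hw_inj[OF B(1)] A(3) inj_on_subset by blast
  have injr: "inj_on r A" using hw_inj[OF B(2)] A(3) inj_on_subset by blast
  have COm: "C \<in> sets N" if "C \<in> CO" for C
    using open_in_sets[OF N(2), of C] that by (simp add: CO_def)
  have sub_bis: "\<nu> (s ` A') = \<nu> (r ` A')" "s ` A' \<in> CO" "r ` A' \<in> CO"
    if "compact A'" "open A'" "A' \<subseteq> B" for A'
  proof -
    have "bisection s r A'" unfolding bis_hw using B that by blast
    then show "\<nu> (s ` A') = \<nu> (r ` A')" using inv that by (simp add: open_bisection_def)
    show "s ` A' \<in> CO" using hw_CO[OF B(1) cs that] .
    show "r ` A' \<in> CO" using hw_CO[OF B(2) cr that] .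
  qed
  define T where "T F = r ` (A \<inter> s -` F)" for F
  define G where "G = {C \<in> CO. C \<subseteq> s ` A}"
  have sA: "s ` A \<in> CO" "r ` A \<in> CO" "\<nu> (s ` A) = \<nu> (r ` A)" using sub_bis[OF A] by auto
  have GP: "G \<subseteq> Pow (s ` A)" unfolding G_def by auto
  have claim: "F \<in> sets N \<and> T F \<in> sets N \<and> emeasure N (T F) = emeasure N F"
    if F: "F \<in> sigma_sets (s ` A) G" for F
  proof -
    have "Int_stable G" unfolding Int_stable_def G_def using CO_Int by auto
    from this GP F show ?thesis
    proof (induction rule: sigma_sets_induct_disjoint)
      case (basic C)
      then have C: "C \<in> CO" "C \<subseteq> s ` A" by (auto simp: G_def)
      define A' where "A' = A \<inter> s -` C"
      have cC: "closed C" using C(1) by (simp add: CO_def compact_imp_closed)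
      have "open A'" unfolding A'_def using A(2) C(1) cs by (auto simp: CO_def intro!: open_Int open_vimage)
      moreover have "compact A'" unfolding A'_def
        using A(1) closed_vimage[OF cC cs] by (rule compact_Int_closed)
      moreover have "A' \<subseteq> B" unfolding A'_def using A(3) by blast
      ultimately have *: "\<nu> (s ` A') = \<nu> (r ` A')" "r ` A' \<in> CO" using sub_bis by auto
      have "s ` A' = C" unfolding A'_def using C(2) by auto
      then show ?case using * C COm em unfolding T_def A'_def[symmetric] by simp
    next
      case empty
      then show ?case by (simp add: T_def)
    next
      case (compl F)
      have FsA: "F \<subseteq> s ` A" using sigma_sets_into_sp[OF GP compl(1)] .
      have "A \<inter> s -` (s ` A - F) = A - (A \<inter> s -` F)" by auto
      then have TD: "T (s ` A - F) = r ` A - T F" unfolding T_def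
        using injr by (simp add: inj_on_image_set_diff)
      have TsubA: "T F \<subseteq> r ` A" unfolding T_def by auto
      have m1: "s ` A \<in> sets N" "r ` A \<in> sets N" using COm sA by auto
      have "emeasure N (T (s ` A - F)) = emeasure N (r ` A) - emeasure N (T F)"
        unfolding TD by (rule emeasure_Diff) (use compl(2) m1 TsubA in auto)
      also have "\<dots> = emeasure N (s ` A) - emeasure N F"
        using compl(2) em sA by simp
      also have "\<dots> = emeasure N (s ` A - F)"
        by (rule emeasure_Diff[symmetric]) (use compl(2) m1 FsA in auto)
      finally show ?case using compl(2) m1 TD by auto
    next
      case (union F)
      have TU: "T (\<Union>i. F i) = (\<Union>i. T (F i))" unfolding T_def by auto
      have dj: "disjoint_family (\<lambda>i. T (F i))"
        unfolding disjoint_family_on_def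
      proof (intro ballI impI)
        fix i j :: nat assume "i \<noteq> j"
        then have Fij: "F i \<inter> F j = {}" using union(1) by (simp add: disjoint_family_on_def)
        show "T (F i) \<inter> T (F j) = {}"
        proof (rule ccontr)
          assume "T (F i) \<inter> T (F j) \<noteq> {}"
          then obtain a b where ab: "a \<in> A" "s a \<in> F i" "b \<in> A" "s b \<in> F j" "r a = r b"
            unfolding T_def by auto
          then have "a = b" using injr by (simp add: inj_on_def)
          then show False using ab Fij by blast
        qed
      qed
      have r1: "range F \<subseteq> sets N" "range (\<lambda>i. T (F i)) \<subseteq> sets N" using union(3) by auto
      have "emeasure N (T (\<Union>i. F i)) = (\<Sum>i. emeasure N (T (F i)))"
        unfolding TU by (rule suminf_emeasure[symmetric]) (use r1 dj in auto)
      also have "\<dots> = (\<Sum>i. emeasure N (F i))" using union(3) by simp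
      also have "\<dots> = emeasure N (\<Union>i. F i)" by (rule suminf_emeasure) (use r1 union(1) in auto)
      finally show ?case using r1 TU by auto
    qed
  qed
  have sE: "s ` E \<in> sets N" by (rule hw_meas[OF B(1) N(2) E(1)]) (use E A in auto)
  have "s ` A \<in> sigma_sets X CO" using sA(1) by auto
  then have "(\<inter>) (s ` A) ` sigma_sets X CO = sigma_sets (s ` A) ((\<inter>) (s ` A) ` CO)"
    by (rule sigma_sets_Int) (use sA CO_sub in auto)
  moreover have "s ` E \<in> (\<inter>) (s ` A) ` sigma_sets X CO"
    using sE N(2) sigma_eq E(2) by (auto intro!: image_eqI[of _ _ "s ` E"])
  moreover have "sigma_sets (s ` A) ((\<inter>) (s ` A) ` CO) \<subseteq> sigma_sets (s ` A) G"
    by (rule sigma_sets_subseteq) (use sA(1) CO_Int in \<open>auto simp: G_def\<close>)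
  ultimately have "s ` E \<in> sigma_sets (s ` A) G" by blast
  from claim[OF this] have "emeasure N (T (s ` E)) = emeasure N (s ` E)" by simp
  moreover have "T (s ` E) = r ` E"
    unfolding T_def using E(2) injs by (auto simp: inj_on_def)
  ultimately show ?thesis by simp
qed

lemma inj_disj_image:
  fixes E :: "'i \<Rightarrow> 'a set"
  assumes "inj_on t B" "\<And>k. E k \<subseteq> B" "disjoint_family E"
  shows "disjoint_family (\<lambda>k. t ` E k)"
  unfolding disjoint_family_on_def
proof (intro ballI impI)
  fix i j :: 'i assume "i \<noteq> j"
  then have "E i \<inter> E j = {}" using assms(3) by (simp add: disjoint_family_on_def)
  then show "t ` E i \<inter> t ` E j = {}" using assms(1) assms(2)[of i] assms(2)[of j] unfolding inj_on_def by blast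
qed

lemma invariant:
  fixes \<nu> :: "'g set \<Rightarrow> real"
  assumes N: "prob_space N" "space N = X" "sets N = sets (restrict_space borel X)"
    and em: "\<And>C. C \<in> CO \<Longrightarrow> emeasure N C = ennreal (\<nu> C)"
    and inv: "\<And>A. compact A \<Longrightarrow> open_bisection s r A \<Longrightarrow> \<nu> (s ` A) = \<nu> (r ` A)"
  shows "N \<in> invariant_measures s r"
  unfolding invariant_measures_def
proof (intro CollectI conjI allI impI)
  show "regular_borel_prob (unit_space s) N" by (rule regular[OF N])
  fix U assume U: "U \<in> sets borel" "bisection s r U"
  then obtain B where B: "hw s B" "hw r B" "U \<subseteq> B" unfolding bis_hw by blast
  have oB: "open B" using B(1) by (simp add: hw_def)
  have injs: "inj_on s B" "inj_on r B" using hw_inj B by auto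
  define \<A> where "\<A> = {A. compact A \<and> open A \<and> A \<subseteq> B}"
  have sB: "open (s ` B)" "s ` B \<subseteq> X" using hw_open[OF B(1) oB order_refl] by auto
  have UU: "\<Union>((\<lambda>A. s ` A) ` \<A>) = s ` B"
  proof
    show "\<Union>((\<lambda>A. s ` A) ` \<A>) \<subseteq> s ` B" unfolding \<A>_def by blast
    show "s ` B \<subseteq> \<Union>((\<lambda>A. s ` A) ` \<A>)"
    proof
      fix y assume "y \<in> s ` B"
      then obtain g where g: "g \<in> B" "y = s g" by blast
      obtain A where "compact A" "open A" "g \<in> A" "A \<subseteq> B" using basis[OF oB g(1)] by (elim exE conjE)
      then show "y \<in> \<Union>((\<lambda>A. s ` A) ` \<A>)" using g unfolding \<A>_def by blast
    qed
  qed
  have OV: "open V" if Vin: "V \<in> (\<lambda>A. s ` A) ` \<A>" for V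
  proof -
    obtain A where "A \<in> \<A>" "V = s ` A" using Vin by blast
    then show "open V" using hw_open(1)[OF B(1), of A] by (simp add: \<A>_def)
  qed
  have "\<exists>\<V>. countable \<V> \<and> \<V> \<subseteq> (\<lambda>A. s ` A) ` \<A> \<and> \<Union>\<V> = s ` B"
    by (rule lindelof_X[OF sB(1) sB(2)]) (use OV UU in auto)
  then obtain \<V> where V: "countable \<V>" "\<V> \<subseteq> (\<lambda>A. s ` A) ` \<A>" "\<Union>\<V> = s ` B"
    by (elim exE conjE)
  have "\<exists>\<A>'. countable \<A>' \<and> \<A>' \<subseteq> \<A> \<and> \<V> = (\<lambda>A. s ` A) ` \<A>'"
    by (subst countable_subset_image[symmetric]) (use V in simp)
  then obtain \<A>' where A': "countable \<A>'" "\<A>' \<subseteq> \<A>" "\<V> = (\<lambda>A. s ` A) ` \<A>'"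
    by (elim exE conjE)
  have UA': "\<Union>\<A>' = B"
  proof
    show "\<Union>\<A>' \<subseteq> B" using A'(2) unfolding \<A>_def by blast
    show "B \<subseteq> \<Union>\<A>'"
    proof
      fix g assume g: "g \<in> B"
      then have "s g \<in> \<Union>\<V>" using V(3) by blast
      then obtain A a where Aa: "A \<in> \<A>'" "a \<in> A" "s g = s a" using A'(3) by blast
      then have "a \<in> B" using A'(2) unfolding \<A>_def by blast
      then have "g = a" using injs(1) g Aa(3) by (simp add: inj_on_def)
      then show "g \<in> \<Union>\<A>'" using Aa by blast
    qed
  qed
  show "measure N (s ` U) = measure N (r ` U)"
  proof (cases "\<A>' = {}")
    case True
    then have "U = {}" using UA' B(3) by auto
    then show ?thesis by simp
  next
    case False
    define Af where "Af = from_nat_into \<A>'"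
    have rAf: "range Af = \<A>'" unfolding Af_def using False A'(1) by simp
    have AfA: "Af k \<in> \<A>" for k
    proof -
      have "Af k \<in> range Af" by (rule rangeI)
      then have "Af k \<in> \<A>'" by (simp only: rAf)
      then show ?thesis using A'(2) by (rule rev_subsetD)
    qed
    have Afk1: "compact (Af k)" for k using AfA[of k] by (simp add: \<A>_def)
    have Afk2: "open (Af k)" for k using AfA[of k] by (simp add: \<A>_def)
    have Afk3: "Af k \<subseteq> B" for k using AfA[of k] by (simp add: \<A>_def)
    note Afk = Afk1 Afk2 Afk3
    define E where "E k = U \<inter> disjointed Af k" for k
    have Esub: "E k \<subseteq> Af k" for k unfolding E_def using disjointed_subset[of Af k] by blast
    have EB: "E k \<subseteq> B" for k using Esub[of k] Afk(3)[of k] by blast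
    have Edj: "disjoint_family E" 
      using disjoint_family_disjointed[of Af] unfolding disjoint_family_on_def E_def by blast
    have UAf: "(\<Union>k. Af k) = B" using rAf UA' by simp
    have EU: "(\<Union>k. E k) = U"
    proof -
      have "(\<Union>k. E k) = U \<inter> (\<Union>k. disjointed Af k)" unfolding E_def by blast
      also have "\<dots> = U \<inter> (\<Union>k. Af k)" by (simp only: UN_disjointed_eq)
      also have "\<dots> = U" using UAf B(3) by blast
      finally show ?thesis .
    qed
    have Eb: "E k \<in> sets borel" for k
    proof -
      have Ab: "Af i \<in> sets borel" for i using Afk(2)[of i] by (rule borel_open)
      have "(\<Union>i\<in>{0..<k}. Af i) \<in> sets borel" by (rule sets.finite_UN) (use Ab in auto)
      then have "disjointed Af k \<in> sets borel" unfolding disjointed_def using Ab[of k] by (rule sets.Diff[rotated])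
      then show ?thesis unfolding E_def using U(1) by (rule sets.Int[rotated])
    qed
    have ms: "s ` E k \<in> sets N" for k by (rule hw_meas[OF B(1) N(3) Eb EB])
    have mr: "r ` E k \<in> sets N" for k by (rule hw_meas[OF B(2) N(3) Eb EB])
    have eqk: "emeasure N (r ` E k) = emeasure N (s ` E k)" for k
      by (rule eq_part[OF N(1) N(3) em inv B(1,2) Afk Eb Esub])
    have sU: "s ` U = (\<Union>k. s ` E k)" unfolding EU[symmetric] by blast
    have rU: "r ` U = (\<Union>k. r ` E k)" unfolding EU[symmetric] by blast
    have "emeasure N (s ` U) = emeasure N (\<Union>k. s ` E k)" by (simp only: sU)
    also have "\<dots> = (\<Sum>k. emeasure N (s ` E k))"
      by (rule suminf_emeasure[symmetric]) (use ms inj_disj_image[OF injs(1) EB Edj] in auto)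
    also have "\<dots> = (\<Sum>k. emeasure N (r ` E k))" using eqk by simp
    also have "\<dots> = emeasure N (\<Union>k. r ` E k)"
      by (rule suminf_emeasure) (use mr inj_disj_image[OF injs(2) EB Edj] in auto)
    also have "\<dots> = emeasure N (r ` U)" by (simp only: rU)
    finally show ?thesis by (simp add: measure_def)
  qed
qed

lemma CO_Union: "finite S \<Longrightarrow> S \<subseteq> CO \<Longrightarrow> \<Union>S \<in> CO"
  by (induction S rule: finite_induct) (auto simp: CO_empty CO_Un)

lemma compactQ: "compact (Pi\<^sub>E UNIV (\<lambda>_::'g set. {0..1::real}))"
proof -
  have "compactin (product_topology (\<lambda>_::'g set. (euclidean :: real topology)) UNIV) (Pi\<^sub>E UNIV (\<lambda>_. {0..1::real}))"
    by (simp add: compactin_PiE)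
  then show ?thesis by (simp add: euclidean_product_topology)
qed

lemma cont_coord: "continuous_on UNIV (\<lambda>f::'g set \<Rightarrow> real. f C)"
  by (rule continuous_on_product_coordinates)

lemma key_approx:
  assumes K: "K \<in> CO" and V: "open V" "V \<subseteq> X"
    and lt: "\<forall>\<mu>\<in>invariant_measures s r. measure \<mu> K < measure \<mu> V"
  shows "\<exists>W\<in>CO. W \<subseteq> V \<and> (\<forall>\<mu>\<in>invariant_measures s r. measure \<mu> K < measure \<mu> W)"
proof (rule ccontr)
  let ?M = "invariant_measures s r"
  assume "\<not> ?thesis"
  then have "\<forall>W\<in>{W \<in> CO. W \<subseteq> V}. \<exists>\<mu>\<in>?M. measure \<mu> W \<le> measure \<mu> K" by (auto simp: not_less)
  then obtain mu where mu: "\<And>W. W \<in> {W \<in> CO. W \<subseteq> V} \<Longrightarrow> mu W \<in> ?M \<and> measure (mu W) W \<le> measure (mu W) K"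
    by metis
  define D where "D = {W \<in> CO. W \<subseteq> V}"
  have D0: "{} \<in> D" unfolding D_def using CO_empty by simp
  have muD: "mu W \<in> ?M" "measure (mu W) W \<le> measure (mu W) K" if "W \<in> D" for W
    using mu that unfolding D_def by auto
  have Mfacts: "prob_space \<mu>" "space \<mu> = X" "sets \<mu> = sets (restrict_space borel X)"
    "\<And>U. U \<in> sets borel \<Longrightarrow> bisection s r U \<Longrightarrow> measure \<mu> (s ` U) = measure \<mu> (r ` U)"
    if "\<mu> \<in> ?M" for \<mu>
    using that unfolding invariant_measures_def regular_borel_prob_def by auto
  define fW where "fW W = (\<lambda>C. measure (mu W) C)" for W
  define Q where "Q = Pi\<^sub>E UNIV (\<lambda>_::'g set. {0..1::real})"
  define Fs where "Fs W = closure (fW ` {W' \<in> D. W \<subseteq> W'})" for W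
  have fQ: "fW W \<in> Q" if "W \<in> D" for W
  proof -
    interpret P: prob_space "mu W" using Mfacts(1)[OF muD(1)[OF that]] .
    show ?thesis unfolding Q_def fW_def by (auto simp: PiE_UNIV_domain)
  qed
  have "Q \<inter> (\<Inter>W\<in>D. Fs W) \<noteq> {}"
  proof (rule compact_imp_fip_image)
    show "compact Q" unfolding Q_def by (rule compactQ)
    show "closed (Fs W)" for W unfolding Fs_def by simp
    fix I' assume I': "finite I'" "I' \<subseteq> D"
    define Wu where "Wu = \<Union>I'"
    have "I' \<subseteq> CO" using I'(2) unfolding D_def by blast
    then have "Wu \<in> CO" unfolding Wu_def by (rule CO_Union[OF I'(1)])
    moreover have "Wu \<subseteq> V" unfolding Wu_def using I'(2) unfolding D_def by blast
    ultimately have "Wu \<in> D" unfolding D_def by blast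
    then have "fW Wu \<in> Q" by (rule fQ)
    moreover have "fW Wu \<in> Fs W" if "W \<in> I'" for W
    proof -
      have "W \<subseteq> Wu" unfolding Wu_def using that by blast
      then have "fW Wu \<in> fW ` {W' \<in> D. W \<subseteq> W'}" using \<open>Wu \<in> D\<close> by blast
      then show ?thesis unfolding Fs_def using closure_subset[of "fW ` {W' \<in> D. W \<subseteq> W'}"] by blast
    qed
    ultimately show "Q \<inter> (\<Inter>W\<in>I'. Fs W) \<noteq> {}" by blast
  qed
  then obtain \<nu> where \<nu>: "\<nu> \<in> Q" "\<And>W. W \<in> D \<Longrightarrow> \<nu> \<in> Fs W" by blast
  have transfer: "\<nu> \<in> S" if "closed S" "W \<in> D" "\<And>W'. W' \<in> D \<Longrightarrow> W \<subseteq> W' \<Longrightarrow> fW W' \<in> S" for S W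
  proof -
    have "closure (fW ` {W' \<in> D. W \<subseteq> W'}) \<subseteq> S"
      by (rule closure_minimal) (use that in auto)
    then show ?thesis using \<nu>(2)[OF that(2)] unfolding Fs_def by blast
  qed
  have pos: "\<nu> C \<ge> 0" if "C \<in> CO" for C
  proof -
    have "\<nu> \<in> {f. 0 \<le> f C}"
      by (rule transfer[OF _ D0]) (auto simp: fW_def intro!: closed_Collect_le cont_coord continuous_on_const)
    then show ?thesis by simp
  qed
  have add: "\<nu> (A \<union> B) = \<nu> A + \<nu> B" if "A \<in> CO" "B \<in> CO" "A \<inter> B = {}" for A B
  proof -
    have "\<nu> \<in> {f. f (A \<union> B) = f A + f B}"
    proof (rule transfer[OF _ D0])
      show "closed {f::'g set \<Rightarrow> real. f (A \<union> B) = f A + f B}"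
        by (intro closed_Collect_eq cont_coord continuous_on_add)
      fix W' assume "W' \<in> D"
      then have m: "mu W' \<in> ?M" by (rule muD)
      interpret P: prob_space "mu W'" using Mfacts(1)[OF m] .
      have "A \<in> sets (mu W')" "B \<in> sets (mu W')"
        using open_in_sets[OF Mfacts(3)[OF m]] that by (auto simp: CO_def)
      then show "fW W' \<in> {f. f (A \<union> B) = f A + f B}"
        unfolding fW_def using that(3) by (simp add: P.finite_measure_Union)
    qed
    then show ?thesis by simp
  qed
  have one: "\<nu> X = 1"
  proof -
    have "\<nu> \<in> {f. f X = 1}"
    proof (rule transfer[OF _ D0])
      show "closed {f::'g set \<Rightarrow> real. f X = 1}"
        by (intro closed_Collect_eq cont_coord continuous_on_const)
      fix W' assume "W' \<in> D"
      then have m: "mu W' \<in> ?M" by (rule muD)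
      interpret P: prob_space "mu W'" using Mfacts(1)[OF m] .
      show "fW W' \<in> {f. f X = 1}" unfolding fW_def using Mfacts(2)[OF m] P.prob_space by simp
    qed
    then show ?thesis by simp
  qed
  have inv: "\<nu> (s ` A) = \<nu> (r ` A)" if "compact A" "open_bisection s r A" for A
  proof -
    have "\<nu> \<in> {f. f (s ` A) = f (r ` A)}"
    proof (rule transfer[OF _ D0])
      show "closed {f::'g set \<Rightarrow> real. f (s ` A) = f (r ` A)}"
        by (intro closed_Collect_eq cont_coord)
      fix W' assume "W' \<in> D"
      then have m: "mu W' \<in> ?M" by (rule muD)
      have "A \<in> sets borel" "bisection s r A" using that by (auto simp: open_bisection_def)
      then show "fW W' \<in> {f. f (s ` A) = f (r ` A)}" unfolding fW_def using Mfacts(4)[OF m] by simp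
    qed
    then show ?thesis by simp
  qed
  have leK: "\<nu> W \<le> \<nu> K" if "W \<in> D" for W
  proof -
    have "\<nu> \<in> {f. f W \<le> f K}"
    proof (rule transfer[OF _ that])
      show "closed {f::'g set \<Rightarrow> real. f W \<le> f K}"
        by (intro closed_Collect_le cont_coord)
      fix W' assume W': "W' \<in> D" "W \<subseteq> W'"
      have m: "mu W' \<in> ?M" by (rule muD(1)[OF W'(1)])
      interpret P: prob_space "mu W'" using Mfacts(1)[OF m] .
      have "W' \<in> sets (mu W')" using open_in_sets[OF Mfacts(3)[OF m], of W'] W'(1) by (simp add: D_def CO_def)
      then have "measure (mu W') W \<le> measure (mu W') W'" using W'(2) by (rule P.finite_measure_mono[rotated])
      also have "\<dots> \<le> measure (mu W') K" by (rule muD(2)[OF W'(1)])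
      finally show "fW W' \<in> {f. f W \<le> f K}" unfolding fW_def by simp
    qed
    then show ?thesis by simp
  qed
  obtain N where N: "prob_space N" "space N = X" "sets N = sets (restrict_space borel X)"
    "\<And>C. C \<in> CO \<Longrightarrow> emeasure N C = ennreal (\<nu> C)"
    using construct[of \<nu>, OF pos add one] by blast
  have NM: "N \<in> ?M" by (rule invariant[OF N inv])
  interpret NP: prob_space N by (rule N(1))
  have meas: "measure N C = \<nu> C" if "C \<in> CO" for C
    using N(4)[OF that] pos[OF that] by (simp add: measure_def)
  have "measure N V \<le> \<nu> K"
  proof -
    obtain \<C> where C: "countable \<C>" "\<C> \<subseteq> CO" "\<Union>\<C> = V" using CO_cover[OF V] by blast
    show ?thesis
    proof (cases "\<C> = {}")
      case True
      then have "V = {}" using C by auto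
      then show ?thesis using pos[OF K] by simp
    next
      case False
      define Cf where "Cf = from_nat_into \<C>"
      have rC: "range Cf = \<C>" unfolding Cf_def using False C(1) by simp
      have CfCO: "Cf i \<in> CO" for i
      proof -
        have "Cf i \<in> range Cf" by (rule rangeI)
        then have "Cf i \<in> \<C>" by (simp only: rC)
        then show ?thesis using C(2) by (rule rev_subsetD)
      qed
      define Wn where "Wn n = (\<Union>i\<in>{..<n}. Cf i)" for n
      have WnCO: "Wn n \<in> CO" for n unfolding Wn_def
        by (rule CO_Union) (use CfCO in auto)
      have WnV: "Wn n \<subseteq> V" for n unfolding Wn_def using rC C(3) by blast
      have WnD: "Wn n \<in> D" for n unfolding D_def using WnCO WnV by simp
      have Wm: "Wn n \<in> sets N" for n using open_in_sets[OF N(3), of "Wn n"] WnCO[of n] by (simp add: CO_def)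
      have "(\<lambda>n. measure N (Wn n)) \<longlonglongrightarrow> measure N (\<Union>n. Wn n)"
      proof (rule NP.finite_Lim_measure_incseq)
        show "range Wn \<subseteq> sets N" using Wm by auto
        show "incseq Wn" unfolding incseq_def Wn_def by (auto simp: subset_eq)
      qed
      moreover have "(\<Union>n. Wn n) = V"
      proof
        show "(\<Union>n. Wn n) \<subseteq> V" using WnV by blast
        show "V \<subseteq> (\<Union>n. Wn n)"
        proof
          fix x assume "x \<in> V"
          then obtain i where "x \<in> Cf i" using rC C(3) by blast
          then have "x \<in> Wn (Suc i)" unfolding Wn_def by blast
          then show "x \<in> (\<Union>n. Wn n)" by blast
        qed
      qed
      ultimately have lim: "(\<lambda>n. measure N (Wn n)) \<longlonglongrightarrow> measure N V" by simp
      show ?thesis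
      proof (rule LIMSEQ_le_const2[OF lim])
        show "\<exists>N0. \<forall>n\<ge>N0. measure N (Wn n) \<le> \<nu> K"
          using meas[OF WnCO] leK[OF WnD] by auto
      qed
    qed
  qed
  moreover have "measure N K < measure N V" using lt NM by blast
  ultimately show False using meas[OF K] by simp
qed

lemma CO_between:
  assumes "compact K" "open U" "K \<subseteq> U" "U \<subseteq> X"
  shows "\<exists>K'\<in>CO. K \<subseteq> K' \<and> K' \<subseteq> U"
proof -
  define T where "T = {C \<in> CO. C \<subseteq> U}"
  have "K \<subseteq> \<Union>T"
  proof
    fix x assume "x \<in> K"
    then have "x \<in> U" using assms(3) by blast
    obtain C where "compact C" "open C" "x \<in> C" "C \<subseteq> U" using basis[OF assms(2) \<open>x \<in> U\<close>] by (elim exE conjE)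
    then have "C \<in> T" using assms(4) unfolding T_def CO_def by blast
    then show "x \<in> \<Union>T" using \<open>x \<in> C\<close> by blast
  qed
  moreover have "open B" if "B \<in> T" for B using that unfolding T_def CO_def by blast
  ultimately obtain T' where T': "T' \<subseteq> T" "finite T'" "K \<subseteq> \<Union>T'"
    using compactE[OF assms(1)] by metis
  have "T' \<subseteq> CO" using T'(1) unfolding T_def by blast
  then have "\<Union>T' \<in> CO" by (rule CO_Union[OF T'(2)])
  moreover have "\<Union>T' \<subseteq> U" using T'(1) unfolding T_def by blast
  ultimately show ?thesis using T'(3) by blast
qed

lemma precedes_mono:
  assumes "precedes s r K' W" "K \<subseteq> K'" "W \<subseteq> V"
  shows "precedes s r K V"
proof -
  from assms(1) obtain n :: nat and A :: "nat \<Rightarrow> 'g set" where A: "\<forall>j<n. open_bisection s r (A j)" "K' \<subseteq> (\<Union>j<n. s ` A j)"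
    "\<forall>j<n. r ` A j \<subseteq> W" "\<forall>j<n. \<forall>k<n. j \<noteq> k \<longrightarrow> r ` A j \<inter> r ` A k = {}"
    unfolding precedes_def by (elim exE conjE) simp
  have 2: "K \<subseteq> (\<Union>j<n. s ` A j)" using assms(2) A(2) by (rule order_trans)
  have 3: "\<forall>j<n. r ` A j \<subseteq> V" using A(3) assms(3) by auto
  show ?thesis unfolding precedes_def
    by (rule exI[of _ n], rule exI[of _ A]) (use A(1) 2 3 A(4) in simp)
qed

lemma main_dir:
  assumes co: "strict_comparison_compact_open s r"
  shows "strict_comparison s r"
  unfolding strict_comparison_def
proof (intro allI impI)
  let ?M = "invariant_measures s r"
  fix U V
  assume U: "openin (top_of_set X) U" and V: "openin (top_of_set X) V"
    and lt: "\<forall>\<mu>\<in>?M. measure \<mu> U < measure \<mu> V"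
  have U': "open U" "U \<subseteq> X" using U Xo by (auto simp: openin_open_eq)
  have V': "open V" "V \<subseteq> X" using V Xo by (auto simp: openin_open_eq)
  show "subequiv s r U V" unfolding subequiv_def
  proof (intro allI impI)
    fix K assume K: "compact K" "K \<subseteq> U"
    obtain K' where K': "K' \<in> CO" "K \<subseteq> K'" "K' \<subseteq> U" using CO_between[OF K(1) U'(1) K(2) U'(2)] by blast
    have lt': "\<forall>\<mu>\<in>?M. measure \<mu> K' < measure \<mu> V"
    proof
      fix \<mu> assume m: "\<mu> \<in> ?M"
      then have P: "prob_space \<mu>" "sets \<mu> = sets (restrict_space borel X)"
        unfolding invariant_measures_def regular_borel_prob_def by auto
      interpret P: prob_space \<mu> by (rule P(1))
      have "U \<in> sets \<mu>" by (rule open_in_sets[OF P(2) U'])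
      then have "measure \<mu> K' \<le> measure \<mu> U" using K'(3) by (rule P.finite_measure_mono[rotated])
      also have "\<dots> < measure \<mu> V" using lt m by blast
      finally show "measure \<mu> K' < measure \<mu> V" .
    qed
    obtain W where W: "W \<in> CO" "W \<subseteq> V" "\<forall>\<mu>\<in>?M. measure \<mu> K' < measure \<mu> W"
      using key_approx[OF K'(1) V' lt'] by blast
    have "openin (top_of_set X) K'" "compact K'" "openin (top_of_set X) W" "compact W"
      using K'(1) W(1) Xo by (auto simp: CO_def openin_open_eq)
    then have "subequiv s r K' W" using W(3) co[unfolded strict_comparison_compact_open_def, rule_format] by simp
    moreover have "compact K'" using K'(1) by (simp add: CO_def)
    ultimately have "precedes s r K' W" unfolding subequiv_def by simp
    then show "precedes s r K V" using K'(2) W(2) by (rule precedes_mono)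
  qed
qed

end

theorem proposition5p5:
  fixes s r :: "'g::t2_space \<Rightarrow> 'g" and m :: "'g \<Rightarrow> 'g \<Rightarrow> 'g" and i :: "'g \<Rightarrow> 'g"
  assumes "topological_groupoid s r m i"
    and "locally_compact_space (euclidean :: 'g topology)"
    and "etale s r"
    and "ample s r"
    and "compact (unit_space s)"
    and "metrizable_space (top_of_set (unit_space s))"
  shows "strict_comparison s r \<longleftrightarrow> strict_comparison_compact_open s r"
proof
  assume "strict_comparison s r"
  then show "strict_comparison_compact_open s r"
    unfolding strict_comparison_def strict_comparison_compact_open_def by blast
next
  assume co: "strict_comparison_compact_open s r"
  have g: "groupoid s r m i" and cs: "continuous_on UNIV s" and cr: "continuous_on UNIV r"
    using assms(1) unfolding topological_groupoid_def by auto
  have ss: "s (s g) = s g" for g using g unfolding groupoid_def by blast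
  have Xo: "open (unit_space s)"
    unfolding open_subopen[of "unit_space s"]
  proof
    fix x assume "x \<in> unit_space s"
    then obtain g where x: "x = s g" unfolding unit_space_def by blast
    then have sx: "s x = x" using ss by simp
    obtain U0 where U0: "open U0" "x \<in> U0" "open (s ` U0)"
      using assms(3) unfolding etale_def by blast
    have "x \<in> s ` U0" using U0(2) sx by (metis image_eqI)
    moreover have "s ` U0 \<subseteq> unit_space s" unfolding unit_space_def by blast
    ultimately show "\<exists>T. open T \<and> x \<in> T \<and> T \<subseteq> unit_space s" using U0(3) by blast
  qed
  have basis: "\<exists>C. compact C \<and> open C \<and> x \<in> C \<and> C \<subseteq> W" if "open (W::'g set)" "x \<in> W" for W x
    using assms(4) that unfolding ample_def open_bisection_def by blast
  have "compact_space (top_of_set (unit_space s))"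
    using assms(5) by (simp add: compact_space_subtopology)
  then have sc: "second_countable (top_of_set (unit_space s))"
    using compact_metrizable_second_countable assms(6) by blast
  interpret ug s r
    by (rule ug.intro[OF cs cr Xo assms(5) basis sc]) auto
  show "strict_comparison s r" by (rule main_dir[OF co])
qed

end
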